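(* Let $d\le n$ be positive integers (with $d\ll n$), let $U\subseteq\mathbb{R}^n$, and let $F:U\to\mathbb{R}^n$ with $F(\bar x)=0$ for some $\bar x\in U$, and let $\mathcal{H}F:U\rightrightarrows\mathbb{R}^{n\times n}$ be a set-valued map and $c>0$ such that $$\forall x\in U,\quad \sup_{H\in\mathcal{H}F(x)}\|F(x)-H(x-\bar x)\|\le c\,\|x-\bar x\|.$$ Let $\mathcal{S}$ be a Johnson–Lindenstrauss-type probability distribution over $\mathbb{R}^{d\times n}$ (see context). Let $y\in U$, $H\in\mathcal{H}F(y)$, let $S$ be sampled from $\mathcal{S}$, and assume there exist $\varepsilon>0$ and $\delta>0$ such that, with probability at least $1-\delta$, all three of the following hold: (i) $\|S^TSHS^TS-H\|\le\varepsilon$; (ii) $\|y-\bar x-S^T(SHS^T)^{-1}SF(y)\|\le(1+\varepsilon)\,\|Sy-S\bar x-(SHS^T)^{-1}SF(y)\|$; (iii) $\|SF(y)-(SHS^T)S(y-\bar x)\|\le(1+\varepsilon)\,\|F(y)-S^T(SHS^T)S(y-\bar x)\|$. Let $y^{+}=y-S^T(SHS^T)^{-1}SF(y)$ (an element of the sketched Newton-type operator $\mathcal{N}_{\mathcal{H}F}(y,S)$, so $SHS^T$ is invertible). Then $$\mathbb{P}\left(\|y^{+}-\bar x\|\le(1+\varepsilon)^2(c+\varepsilon)\,\|(SHS^T)^{-1}\|\,\|y-\bar x\|\right)\ge 1-\delta.$$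
   Context: Norms are Euclidean on vectors and Frobenius on matrices. A Johnson–Lindenstrauss-type distribution over $\mathbb{R}^{d\times n}$ is one for which there are $\varepsilon'>0$, $\delta'<1/2$ with $d\in\mathcal{O}(-\varepsilon'^{-2}\log\delta')$ such that for every $x\in\mathbb{R}^n$ with $\|x\|=1$, a sample $A$ satisfies $\mathbb{P}(|\|Ax\|^2-1|\le\varepsilon')\ge 1-\delta'$ (e.g. matrices with i.i.d. standard normal entries). The sketched Newton-type operator is $\mathcal{N}_{\mathcal{H}F}(x,S)=\{x-S^T(SHS^T)^{-1}SF(x)\;|\;H\in\mathcal{H}F(x),\ \det SHS^T\neq 0\}$. *)

theory Defs
  imports "HOL-Probability.Probability"
begin

text \<open>Matrices in R^(d x n) are rendered as real^'n^'d; the norm on this type is the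
Frobenius norm and the norm on real^'n is the Euclidean norm.\<close>

definition jl_type_distribution :: "(real^'n^'d) measure \<Rightarrow> bool" where
  "jl_type_distribution M \<longleftrightarrow>
     prob_space M \<and> sets M = sets borel \<and>
     (\<exists>eps'>0. \<exists>delta'>0. delta' < 1/2 \<and>
        (\<exists>C>0. real CARD('d) \<le> C * (- ln delta' / eps'^2)) \<and>
        (\<forall>x::real^'n. norm x = 1 \<longrightarrow>
           measure M {A \<in> space M. \<bar>(norm (A *v x))^2 - 1\<bar> \<le> eps'} \<ge> 1 - delta'))"

definition sketched_newton_op ::
  "(real^'n \<Rightarrow> real^'n) \<Rightarrow> (real^'n \<Rightarrow> (real^'n^'n) set) \<Rightarrow> real^'n \<Rightarrow> real^'n^'d \<Rightarrow> (real^'n) set" where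
  "sketched_newton_op F HF x S =
     {x - transpose S *v (matrix_inv (S ** H ** transpose S) *v (S *v F x)) | H.
        H \<in> HF x \<and> det (S ** H ** transpose S) \<noteq> 0}"

end

theory Submission
  imports Defs
begin



lemma cont_mv[continuous_intros]:
  fixes f :: "'a::topological_space \<Rightarrow> real^'n^'m"
  shows "continuous_on S f \<Longrightarrow> continuous_on S g \<Longrightarrow> continuous_on S (\<lambda>x. f x *v g x)"
  unfolding matrix_vector_mult_def by (intro continuous_intros)

lemma cont_mm[continuous_intros]:
  fixes f :: "'a::topological_space \<Rightarrow> real^'n^'m"
  shows "continuous_on S f \<Longrightarrow> continuous_on S g \<Longrightarrow> continuous_on S (\<lambda>x. f x ** g x)"
  unfolding matrix_matrix_mult_def by (intro continuous_intros)

lemma cont_tr[continuous_intros]: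
  fixes f :: "'a::topological_space \<Rightarrow> real^'n^'m"
  shows "continuous_on S f \<Longrightarrow> continuous_on S (\<lambda>x. transpose (f x))"
  unfolding transpose_def by (intro continuous_intros)

lemma cont_det[continuous_intros]:
  fixes f :: "'a::topological_space \<Rightarrow> real^'n^'n"
  shows "continuous_on S f \<Longrightarrow> continuous_on S (\<lambda>x. det (f x))"
  unfolding det_def by (intro continuous_intros)

lemma cont_if_const[continuous_intros]:
  "continuous_on S f \<Longrightarrow> continuous_on S g \<Longrightarrow> continuous_on S (\<lambda>x. if P then f x else g x)"
  by (cases P) auto

lemma minv_sing:
  fixes A :: "real^'n^'n"
  assumes "det A = 0" shows "matrix_inv A = (SOME B. False)"
proof -
  have "\<not> invertible A" using assms invertible_det_nz by blast
  then have "(\<lambda>B. A ** B = mat 1 \<and> B ** A = mat 1) = (\<lambda>B. False)"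
    unfolding invertible_def by auto
  then show ?thesis unfolding matrix_inv_def by simp
qed

lemma minv_props:
  fixes A :: "real^'n^'n"
  assumes "det A \<noteq> 0" shows "A ** matrix_inv A = mat 1" "matrix_inv A ** A = mat 1"
proof -
  have "invertible A" using assms invertible_det_nz by blast
  then have "\<exists>B. A ** B = mat 1 \<and> B ** A = mat 1" unfolding invertible_def by auto
  from someI_ex[OF this] show "A ** matrix_inv A = mat 1" "matrix_inv A ** A = mat 1"
    unfolding matrix_inv_def by auto
qed

lemma minv_formula:
  fixes A :: "real^'n^'n"
  assumes "det A \<noteq> 0"
  shows "matrix_inv A = (\<chi> i j. det(\<chi> r s. if s = i then axis j 1 $ r else A$r$s) / det A)"
proof -
  have "matrix_inv A $ i $ j = det(\<chi> r s. if s = i then axis j 1 $ r else A$r$s) / det A" for i j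
  proof -
    have "A *v (matrix_inv A *v axis j 1) = axis j 1"
      by (simp add: matrix_vector_mul_assoc minv_props(1)[OF assms])
    then have "matrix_inv A *v axis j 1 = (\<chi> k. det(\<chi> r s. if s=k then axis j 1 $r else A$r$s) / det A)"
      using cramer[OF assms] by blast
    moreover have "(matrix_inv A *v axis j 1) $ i = matrix_inv A $ i $ j"
      by (simp add: matrix_vector_mult_def axis_def if_distrib cong: if_cong)
    ultimately show ?thesis by simp
  qed
  then show ?thesis by (simp add: vec_eq_iff)
qed

lemma minv_meas: "(matrix_inv :: real^'n^'n \<Rightarrow> _) \<in> borel_measurable borel"
proof -
  let ?f = "\<lambda>A::real^'n^'n. (\<chi> i j. det(\<chi> r s. if s = i then axis j 1 $ r else A$r$s) / det A)"
  have eq: "matrix_inv = (\<lambda>A::real^'n^'n. if A \<in> {A. det A \<noteq> 0} then ?f A else (SOME B. False))"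
    using minv_formula minv_sing by (auto simp: fun_eq_iff)
  have op: "open {A::real^'n^'n. det A \<noteq> 0}"
    by (intro open_Collect_neq continuous_intros)
  show ?thesis
    apply (subst eq)
    apply (rule borel_measurable_continuous_on_if)
    using op apply simp
     apply (intro continuous_intros)
     apply auto
    done
qed

lemma norm_mv_le:
  fixes A :: "real^'n^'m"
  shows "norm (A *v x) \<le> norm A * norm x"
proof -
  have c: "((A *v x) $ i)^2 \<le> (norm (A $ i))^2 * (norm x)^2" for i
  proof -
    have "(A *v x) $ i = A $ i \<bullet> x"
      by (simp add: matrix_vector_mult_def inner_vec_def)
    then have "\<bar>(A *v x) $ i\<bar> \<le> norm (A$i) * norm x" using Cauchy_Schwarz_ineq2 by simp
    then show ?thesis by (metis abs_ge_zero power2_abs power_mono power_mult_distrib)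
  qed
  have "(norm (A *v x))^2 = (\<Sum>i\<in>UNIV. ((A *v x) $ i)^2)"
    unfolding power2_norm_eq_inner inner_vec_def by (simp add: power2_eq_square)
  also have "\<dots> \<le> (\<Sum>i\<in>UNIV. (norm (A $ i))^2 * (norm x)^2)"
    by (intro sum_mono c)
  also have "\<dots> = (norm A * norm x)^2"
  proof -
    have "(norm A)^2 = (\<Sum>i\<in>UNIV. (norm (A $ i))^2)"
      unfolding power2_norm_eq_inner inner_vec_def by simp
    then show ?thesis by (simp add: sum_distrib_right power_mult_distrib)
  qed
  finally show ?thesis by (simp add: power2_le_iff_abs_le)
qed


theorem mainTheorem6:
  fixes U :: "(real^'n) set" and F :: "real^'n \<Rightarrow> real^'n" and xbar :: "real^'n"
    and HF :: "real^'n \<Rightarrow> (real^'n^'n) set" and c :: real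
    and M :: "(real^'n^'d) measure"
    and y :: "real^'n" and H :: "real^'n^'n" and eps delta :: real
  assumes "CARD('d) \<le> CARD('n)"
    and "xbar \<in> U" and "F xbar = 0" and "c > 0"
    and "\<forall>x\<in>U. \<forall>H'\<in>HF x. norm (F x - H' *v (x - xbar)) \<le> c * norm (x - xbar)"
    and "jl_type_distribution M"
    and "y \<in> U" and "H \<in> HF y"
    and "eps > 0" and "delta > 0"
    and "measure M {S \<in> space M.
            norm (transpose S ** S ** H ** transpose S ** S - H) \<le> eps \<and>
            norm (y - xbar - transpose S *v (matrix_inv (S ** H ** transpose S) *v (S *v F y)))
              \<le> (1 + eps) * norm (S *v y - S *v xbar - matrix_inv (S ** H ** transpose S) *v (S *v F y)) \<and>
            norm (S *v F y - (S ** H ** transpose S) *v (S *v (y - xbar)))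
              \<le> (1 + eps) * norm (F y - transpose S *v ((S ** H ** transpose S) *v (S *v (y - xbar))))}
          \<ge> 1 - delta"
    and "AE S in M. det (S ** H ** transpose S) \<noteq> 0"
  shows "measure M {S \<in> space M.
            norm ((y - transpose S *v (matrix_inv (S ** H ** transpose S) *v (S *v F y))) - xbar)
              \<le> (1 + eps)^2 * (c + eps) * norm (matrix_inv (S ** H ** transpose S)) * norm (y - xbar)}
          \<ge> 1 - delta"
  proof -
  note jl = assms(6)[unfolded jl_type_distribution_def]
  interpret prob_space M using jl by blast
  have sM: "sets M = sets borel" using jl by blast
  let ?K = "\<lambda>S::real^'n^'d. S ** H ** transpose S"
  let ?P1 = "\<lambda>S::real^'n^'d. norm (transpose S ** S ** H ** transpose S ** S - H) \<le> eps \<and>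
            norm (y - xbar - transpose S *v (matrix_inv (S ** H ** transpose S) *v (S *v F y)))
              \<le> (1 + eps) * norm (S *v y - S *v xbar - matrix_inv (S ** H ** transpose S) *v (S *v F y)) \<and>
            norm (S *v F y - (S ** H ** transpose S) *v (S *v (y - xbar)))
              \<le> (1 + eps) * norm (F y - transpose S *v ((S ** H ** transpose S) *v (S *v (y - xbar))))"
  let ?P2 = "\<lambda>S::real^'n^'d. norm ((y - transpose S *v (matrix_inv (S ** H ** transpose S) *v (S *v F y))) - xbar)
              \<le> (1 + eps)^2 * (c + eps) * norm (matrix_inv (S ** H ** transpose S)) * norm (y - xbar)"
  have pw: "?P2 S" if d: "det (?K S) \<noteq> 0" and p: "?P1 S" for S
  proof -
    define K where "K = ?K S"
    define Ki where "Ki = matrix_inv K"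
    define v where "v = y - xbar"
    define s where "s = S *v F y"
    define P where "P = transpose S ** S ** H ** transpose S ** S"
    have dK: "det K \<noteq> 0" using d K_def by simp
    have i: "norm (P - H) \<le> eps" using p P_def by simp
    have ii: "norm (v - transpose S *v (Ki *v s)) \<le> (1 + eps) * norm (S *v v - Ki *v s)"
      using p unfolding v_def Ki_def K_def s_def by (simp add: matrix_vector_mult_diff_distrib)
    have iii: "norm (s - K *v (S *v v)) \<le> (1 + eps) * norm (F y - transpose S *v (K *v (S *v v)))"
      using p unfolding v_def K_def s_def by simp
    have kk: "Ki *v (K *v w) = w" for w
      by (simp add: matrix_vector_mul_assoc Ki_def minv_props(2)[OF dK])
    have e1: "S *v v - Ki *v s = Ki *v (K *v (S *v v) - s)"
      by (simp add: matrix_vector_mult_diff_distrib kk)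
    have e2: "transpose S *v (K *v (S *v v)) = P *v v"
      by (simp add: K_def P_def matrix_vector_mul_assoc matrix_mul_assoc)
    have e3: "F y - P *v v = (F y - H *v v) + (H - P) *v v"
      by (simp add: matrix_vector_mult_diff_rdistrib)
    have hc: "norm (F y - H *v v) \<le> c * norm v"
      using assms(5,7,8) v_def by blast
    have "norm (F y - P *v v) \<le> c * norm v + norm (H - P) * norm v"
      unfolding e3 by (rule order_trans[OF norm_triangle_ineq]) (intro add_mono hc norm_mv_le)
    also have "\<dots> \<le> c * norm v + eps * norm v"
      using i by (simp add: norm_minus_commute mult_right_mono)
    finally have h4: "norm (F y - P *v v) \<le> (c + eps) * norm v" by (simp add: algebra_simps)
    have "norm (v - transpose S *v (Ki *v s)) \<le> (1 + eps) * (norm Ki * norm (s - K *v (S *v v)))"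
      using ii unfolding e1
      by (rule order_trans) (use assms(9) in \<open>auto intro!: mult_left_mono simp: norm_mv_le norm_minus_commute[of _ s]
            intro: order_trans[OF norm_mv_le]\<close>)
    also have "\<dots> \<le> (1 + eps) * (norm Ki * ((1 + eps) * ((c + eps) * norm v)))"
      using iii h4 e2 assms(9)
      by (intro mult_left_mono order_trans[OF iii]) auto
    finally have "norm (v - transpose S *v (Ki *v s)) \<le> (1 + eps)^2 * (c + eps) * norm Ki * norm v"
      by (simp add: power2_eq_square algebra_simps)
    then show ?thesis unfolding v_def Ki_def K_def s_def by (simp add: algebra_simps)
  qed
  have meas: "{S \<in> space M. ?P2 S} \<in> sets M"
  proof -
    have mi[measurable]: "(\<lambda>S::real^'n^'d. matrix_inv (S ** H ** transpose S)) \<in> borel_measurable M"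
    proof -
      have "(\<lambda>S::real^'n^'d. S ** H ** transpose S) \<in> borel_measurable borel"
        by (intro borel_measurable_continuous_onI continuous_intros)
      then have "(\<lambda>S::real^'n^'d. matrix_inv (S ** H ** transpose S)) \<in> borel_measurable borel"
        using minv_meas by (rule measurable_compose)
      then show ?thesis using measurable_cong_sets[OF sM refl] by blast
    qed
    have idm: "(\<lambda>S::real^'n^'d. S) \<in> borel_measurable M"
      by (rule measurable_ident_sets[OF sM])
    have l[measurable]: "(\<lambda>S::real^'n^'d. norm ((y - transpose S *v (matrix_inv (S ** H ** transpose S) *v (S *v F y))) - xbar)) \<in> borel_measurable M"
      by (rule borel_measurable_continuous_Pair[OF idm mi, of "\<lambda>S Ki. norm ((y - transpose S *v (Ki *v (S *v F y))) - xbar)"])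
        (intro continuous_intros)
    have r[measurable]: "(\<lambda>S::real^'n^'d. (1 + eps)^2 * (c + eps) * norm (matrix_inv (S ** H ** transpose S)) * norm (y - xbar)) \<in> borel_measurable M"
      by measurable
    show ?thesis by measurable
  qed
  have "measure M {S \<in> space M. ?P1 S} \<le> measure M {S \<in> space M. ?P2 S}"
  proof (rule finite_measure_mono_AE[OF _ meas])
    show "AE S in M. S \<in> {S \<in> space M. ?P1 S} \<longrightarrow> S \<in> {S \<in> space M. ?P2 S}"
      using assms(12) by eventually_elim (use pw in blast)
  qed
  then show ?thesis using assms(11) by linarith
qed

end
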